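(* A morphism $m:A\to Z$ of $\mathbf{iRel}$ is a monomorphism in $\mathbf{iRel}$ if and only if it is total, i.e. $m(a)\neq\emptyset$ for every $a\in A$.
   Context: A binary relation $R:A\to Z$ (i.e. $R\subseteq A\times Z$; write $aRz$ for $\langle a,z\rangle\in R$) is injective if $aRz$ and $a'Rz$ imply $a=a'$. $\mathbf{iRel}$ is the category of sets and injective relations, with relational composition. For $a\in A$, $m(a)=\{z\in Z: amz\}$. *)

theory Defs
  imports Main
begin

definition inj_rel :: "('a \<times> 'z) set \<Rightarrow> bool" where
  "inj_rel R \<longleftrightarrow> (\<forall>a a' z. (a, z) \<in> R \<longrightarrow> (a', z) \<in> R \<longrightarrow> a = a')"

definition irel_hom :: "'a set \<Rightarrow> 'z set \<Rightarrow> ('a \<times> 'z) set \<Rightarrow> bool" where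
  "irel_hom A Z R \<longleftrightarrow> R \<subseteq> A \<times> Z \<and> inj_rel R"

text \<open>Composition in iRel: the composite m after f is the relational composite f O m.
  A morphism m : A -> Z is a monomorphism if for every object X (a set, here ranging
  over subsets of an arbitrary type 'x) and all morphisms f, g : X -> A,
  (m after f) = (m after g) implies f = g.\<close>
definition irel_mono :: "'x itself \<Rightarrow> 'a set \<Rightarrow> 'z set \<Rightarrow> ('a \<times> 'z) set \<Rightarrow> bool" where
  "irel_mono _ A Z m \<longleftrightarrow> irel_hom A Z m \<and>
     (\<forall>(X :: 'x set) f g. irel_hom X A f \<longrightarrow> irel_hom X A g \<longrightarrow> f O m = g O m \<longrightarrow> f = g)"

end

theory Submission
  imports Defs
begin

lemma half:
  assumes m: "inj_rel m" and tot: "\<forall>a \<in> A. {z. (a, z) \<in> m} \<noteq> {}"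
    and f: "f \<subseteq> X \<times> A" and e: "f O m = g O m"
  shows "f \<subseteq> g"
proof
  fix p assume p: "p \<in> f"
  obtain x a where pa: "p = (x, a)" by (cases p)
  with p f have "a \<in> A" by auto
  with tot obtain z where z: "(a, z) \<in> m" by auto
  with p pa have "(x, z) \<in> f O m" by auto
  with e obtain a' where "(x, a') \<in> g" "(a', z) \<in> m" by auto
  with z m have "a' = a" unfolding inj_rel_def by blast
  with \<open>(x, a') \<in> g\<close> pa show "p \<in> g" by simp
qed

theorem mainTheorem2:
  fixes A :: "'a set" and Z :: "'z set" and m :: "('a \<times> 'z) set"
  assumes "irel_hom A Z m"
  shows "irel_mono TYPE('x) A Z m \<longleftrightarrow> (\<forall>a \<in> A. {z. (a, z) \<in> m} \<noteq> {})"
proof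
  assume mono: "irel_mono TYPE('x) A Z m"
  show "\<forall>a \<in> A. {z. (a, z) \<in> m} \<noteq> {}"
  proof (rule ccontr)
    assume "\<not> ?thesis"
    then obtain a where a: "a \<in> A" "{z. (a, z) \<in> m} = {}" by auto
    obtain x :: 'x where True by simp
    have h1: "irel_hom {x} A {(x, a)}" using a unfolding irel_hom_def inj_rel_def by auto
    have h2: "irel_hom {x} A ({} :: ('x \<times> 'a) set)" unfolding irel_hom_def inj_rel_def by auto
    have "{(x, a)} O m = ({} :: ('x \<times> 'a) set) O m" using a by auto
    with mono h1 h2 have "{(x, a)} = ({} :: ('x \<times> 'a) set)"
      unfolding irel_mono_def by blast
    then show False by simp
  qed
next
  assume tot: "\<forall>a \<in> A. {z. (a, z) \<in> m} \<noteq> {}"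
  have mi: "inj_rel m" using assms unfolding irel_hom_def by simp
  show "irel_mono TYPE('x) A Z m"
    unfolding irel_mono_def
  proof (intro conjI allI impI)
    show "irel_hom A Z m" by fact
    fix X :: "'x set" and f g
    assume f: "irel_hom X A f" and g: "irel_hom X A g" and e: "f O m = g O m"
    have "f \<subseteq> g" using half[OF mi tot _ e] f unfolding irel_hom_def by blast
    moreover have "g \<subseteq> f" using half[OF mi tot _ e[symmetric]] g unfolding irel_hom_def by blast
    ultimately show "f = g" by blast
  qed
qed

end
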